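(* For every $n$, $\mathrm{ex}(n,M,K_3)=\mathcal N(M,T_2(n))$ and $\mathrm{ex}(n,M',K_3)=\mathcal N(M',T_2(n))$.
   Context: $M$ is the five-vertex graph consisting of two independent edges and an isolated vertex; $M'$ is the five-vertex graph consisting of a path $P_3$ on three vertices and a disjoint edge. $T_2(n)$ is the complete bipartite graph on $n$ vertices with parts of sizes $\lfloor n/2\rfloor$ and $\lceil n/2\rceil$. $\mathcal N(H,G)$ is the number of subgraphs of $G$ isomorphic to $H$; $\mathrm{ex}(n,H,K_3)$ is the maximum of $\mathcal N(H,G)$ over triangle-free $n$-vertex graphs $G$. *)

theory Defs
  imports Main
begin

text \<open>A (finite simple) graph is a pair (V, E) of a vertex set and a set of
  2-element subsets of V (the edges).\<close>
type_synonym 'a graph = "'a set \<times> 'a set set"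

definition simple_graph :: "'a graph \<Rightarrow> bool" where
  "simple_graph G \<longleftrightarrow> finite (fst G) \<and> (\<forall>e\<in>snd G. card e = 2 \<and> e \<subseteq> fst G)"

definition triangle_free :: "'a graph \<Rightarrow> bool" where
  "triangle_free G \<longleftrightarrow>
     \<not> (\<exists>a b c. {a, b} \<in> snd G \<and> {b, c} \<in> snd G \<and> {a, c} \<in> snd G
              \<and> a \<noteq> b \<and> b \<noteq> c \<and> a \<noteq> c)"

definition graph_iso :: "'b graph \<Rightarrow> 'a graph \<Rightarrow> bool" where
  "graph_iso H G \<longleftrightarrow>
     (\<exists>f. bij_betw f (fst H) (fst G) \<and> snd G = (\<lambda>e. f ` e) ` snd H)"

definition count_copies :: "'b graph \<Rightarrow> 'a graph \<Rightarrow> nat" where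
  "count_copies H G = card {(V', E'). V' \<subseteq> fst G \<and> E' \<subseteq> snd G \<and> (\<forall>e\<in>E'. e \<subseteq> V')
                                    \<and> graph_iso H (V', E')}"

definition ex_tf :: "nat \<Rightarrow> 'b graph \<Rightarrow> nat" where
  "ex_tf n H = Max {count_copies H G | G :: nat graph.
                      simple_graph G \<and> fst G = {0..<n} \<and> triangle_free G}"

definition T2 :: "nat \<Rightarrow> nat graph" where
  "T2 n = ({0..<n}, {{a, b} | a b. a < n div 2 \<and> n div 2 \<le> b \<and> b < n})"

definition graph_M :: "nat graph" where
  "graph_M = ({0..<5}, {{0, 1}, {2, 3}})"

definition graph_M' :: "nat graph" where
  "graph_M' = ({0..<5}, {{0, 1}, {1, 2}, {3, 4}})"

end

theory Submission
  imports Defs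
begin


lemma arith_even:
  fixes a e S :: int
  assumes "a \<ge> 1" "e \<ge> 0" "4*e^2 \<le> (2*a)*S" "S \<le> (2*a)*e" "2*e \<le> S"
  shows "e^2 + e - S \<le> (a*a)^2 + a*a - a*a*(2*a)"
proof -
  have "(2*a)*S \<le> (2*a)*((2*a)*e)" using assms(4) assms(1) by (intro mult_left_mono) auto
  hence "4*e^2 \<le> (2*a)*(2*a)*e" using assms(3) by (simp add: mult.assoc)
  hence ea: "e \<le> a^2"
  proof (cases "e = 0")
    case False
    hence "e > 0" using assms by simp
    assume H: "4*e^2 \<le> (2*a)*(2*a)*e"
    have eq1: "4*e^2 = e*(4*e)" by (simp add: power2_eq_square algebra_simps)
    have eq2: "(2*a)*(2*a)*e = e*(4*a^2)" by (simp add: power2_eq_square algebra_simps)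
    have "e*(4*e) \<le> e*(4*a^2)" using H unfolding eq1 eq2 .
    hence "4*e \<le> 4*a^2" using \<open>e > 0\<close> by (rule mult_left_le_imp_le)
    thus ?thesis by simp
  qed (use assms in simp)
  have "(2*a)*S = 2*(a*S)" by simp
  hence aS: "2*e^2 \<le> a*S" using assms(3) by linarith
  show ?thesis
  proof (cases "a = 1")
    case True
    have ee: "e \<le> e*e"
    proof (cases "e = 0")
      case False
      hence "1 \<le> e" using assms(2) by simp
      thus ?thesis using mult_right_mono[of 1 e e] assms(2) by simp
    qed simp
    have "2*(e*e) \<le> S" using assms(3) True by (simp add: power2_eq_square)
    then show ?thesis using True ee by (simp add: power2_eq_square)
  next
    case False
    hence a2: "a \<ge> 2" using assms by simp
    have "a*(e^2 + e - S) \<le> (a-2)*e^2 + a*e" using aS by (simp add: algebra_simps)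
    also have "\<dots> \<le> (a-2)*(a^2)^2 + a*a^2"
    proof -
      have "e^2 \<le> (a^2)^2" using power_mono[OF ea assms(2)] .
      hence "(a-2)*e^2 \<le> (a-2)*(a^2)^2" using a2 by (simp add: mult_left_mono)
      moreover have "a*e \<le> a*a^2" using ea a2 by (simp add: mult_left_mono)
      ultimately show ?thesis by simp
    qed
    also have "\<dots> = a*((a*a)^2 + a*a - a*a*(2*a))" by (simp add: algebra_simps power2_eq_square)
    finally show ?thesis using a2 by simp
  qed
qed

lemma arith_odd:
  fixes a e S :: int
  assumes "a \<ge> 0" "e \<ge> 0" "4*e^2 \<le> (2*a+1)*S" "S \<le> (2*a+1)*e" "2*e \<le> S"
    "(2*a+1)*(2*e) - (2*a+1)*a*(a+1) \<le> S"
  shows "e^2 + e - S \<le> (a*(a+1))^2 + a*(a+1) - a*(a+1)*(2*a+1)"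
proof -
  have "(2*a+1)*S \<le> (2*a+1)*((2*a+1)*e)" using assms(4) assms(1) by (intro mult_left_mono) auto
  hence "4*e^2 \<le> (2*a+1)*(2*a+1)*e" using assms(3) by (simp add: mult.assoc)
  hence ea: "e \<le> a*(a+1)"
  proof (cases "e = 0")
    case False
    hence "e > 0" using assms by simp
    assume H: "4*e^2 \<le> (2*a+1)*(2*a+1)*e"
    have eq1: "4*e^2 = e*(4*e)" by (simp add: power2_eq_square algebra_simps)
    have eq2: "(2*a+1)*(2*a+1)*e = e*((2*a+1)*(2*a+1))" by (simp add: algebra_simps)
    have "e*(4*e) \<le> e*((2*a+1)*(2*a+1))" using H unfolding eq1 eq2 .
    hence "4*e \<le> (2*a+1)*(2*a+1)" using \<open>e > 0\<close> by (rule mult_left_le_imp_le)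
    thus ?thesis by (simp add: algebra_simps)
  qed (use assms in simp)
  show ?thesis
  proof (cases "e = a*(a+1)")
    case True
    then show ?thesis using assms(6) by (simp add: algebra_simps power2_eq_square)
  next
    case False
    hence e1: "e \<le> a*(a+1) - 1" using ea by simp
    show ?thesis
    proof (cases "a \<le> 1")
      case True
      hence "a = 0 \<or> a = 1" using assms by auto
      then show ?thesis
      proof
        assume "a = 0" thus ?thesis using e1 assms by simp
      next
        assume a1: "a = 1"
        hence "e \<le> 1" using e1 by simp
        hence "e = 0 \<or> e = 1" using assms by auto
        thus ?thesis using a1 assms by auto
      qed
    next
      case False
      hence a2: "a \<ge> 2" by simp
      define x where "x = a*(a+1)"
      have x1: "x \<ge> 1" using mult_mono[of 1 a 1 "a+1"] a2 unfolding x_def by simp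
      have "(2*a+1)*(e^2 + e - S) \<le> (2*a-3)*e^2 + (2*a+1)*e" using assms(3) by (simp add: algebra_simps)
      also have "\<dots> \<le> (2*a-3)*(x-1)^2 + (2*a+1)*(x-1)"
      proof -
        have "e^2 \<le> (x-1)^2" using e1 assms(2) unfolding x_def by (simp add: power_mono)
        hence "(2*a-3)*e^2 \<le> (2*a-3)*(x-1)^2" using a2 by (simp add: mult_left_mono)
        moreover have "(2*a+1)*e \<le> (2*a+1)*(x-1)" using e1 a2 unfolding x_def by (simp add: mult_left_mono)
        ultimately show ?thesis by simp
      qed
      also have "\<dots> \<le> (2*a+1)*(x^2 + x - x*(2*a+1))"
      proof -
        have "(2*a+1)*(x^2 + x - x*(2*a+1)) - ((2*a-3)*(x-1)^2 + (2*a+1)*(x-1)) = x*(4*a-7)+4"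
          unfolding x_def by (simp add: algebra_simps power2_eq_square)
        moreover have "x*(4*a-7) \<ge> 0" using x1 a2 by simp
        ultimately show ?thesis by simp
      qed
      finally show ?thesis unfolding x_def using a2 by simp
    qed
  qed
qed


lemma dc:
  assumes "finite A" "finite B"
  shows "(\<Sum>a\<in>A. card {b\<in>B. R a b}) = (\<Sum>b\<in>B. card {a\<in>A. R a b})"
  unfolding card_eq_sum by (rule sum.swap_restrict[OF assms])

definition deg :: "'a set set \<Rightarrow> 'a \<Rightarrow> nat" where
  "deg E v = card {x\<in>E. v\<in>x}"

locale sg =
  fixes V :: "'a set" and E :: "'a set set"
  assumes finV: "finite V" and edges: "\<And>x. x \<in> E \<Longrightarrow> card x = 2 \<and> x \<subseteq> V"
begin

lemma finE: "finite E"
proof -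
  have "E \<subseteq> Pow V" using edges by auto
  thus ?thesis using finV finite_subset by blast
qed

lemma handshake: "(\<Sum>v\<in>V. deg E v) = 2 * card E"
proof -
  have "(\<Sum>v\<in>V. deg E v) = (\<Sum>x\<in>E. card {v\<in>V. v\<in>x})"
    unfolding deg_def using dc[OF finV finE, of "\<lambda>v x. v \<in> x"] by simp
  also have "\<dots> = (\<Sum>x\<in>E. 2)"
  proof (rule sum.cong)
    fix x assume "x \<in> E"
    hence "{v\<in>V. v\<in>x} = x" using edges by auto
    thus "card {v\<in>V. v\<in>x} = 2" using edges \<open>x\<in>E\<close> by simp
  qed simp
  finally show ?thesis by simp
qed

lemma sq_edges: "(\<Sum>v\<in>V. deg E v * deg E v) = (\<Sum>x\<in>E. \<Sum>v\<in>x. deg E v)"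
proof -
  have "(\<Sum>v\<in>V. deg E v * deg E v) = (\<Sum>v\<in>V. \<Sum>x\<in>{x\<in>E. v\<in>x}. deg E v)"
    unfolding deg_def by simp
  also have "\<dots> = (\<Sum>x\<in>E. \<Sum>v\<in>{v\<in>V. v\<in>x}. deg E v)"
    using sum.swap_restrict[OF finV finE, of "\<lambda>v x. deg E v" "\<lambda>v x. v \<in> x"] by simp
  also have "\<dots> = (\<Sum>x\<in>E. \<Sum>v\<in>x. deg E v)"
  proof (rule sum.cong)
    fix x assume "x \<in> E"
    hence "{v\<in>V. v\<in>x} = x" using edges by auto
    thus "(\<Sum>v\<in>{v\<in>V. v\<in>x}. deg E v) = (\<Sum>v\<in>x. deg E v)" by simp
  qed simp
  finally show ?thesis .
qed

lemma sq_pairs: "(\<Sum>v\<in>V. deg E v * deg E v) = (\<Sum>p\<in>E\<times>E. card (fst p \<inter> snd p))"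
proof -
  have "(\<Sum>v\<in>V. deg E v * deg E v) = (\<Sum>v\<in>V. card {p\<in>E\<times>E. v \<in> fst p \<and> v \<in> snd p})"
  proof (rule sum.cong)
    fix v assume "v \<in> V"
    have "{p\<in>E\<times>E. v \<in> fst p \<and> v \<in> snd p} = {x\<in>E. v\<in>x} \<times> {x\<in>E. v\<in>x}" by auto
    thus "deg E v * deg E v = card {p\<in>E\<times>E. v \<in> fst p \<and> v \<in> snd p}"
      unfolding deg_def by (simp add: card_cartesian_product)
  qed simp
  also have "\<dots> = (\<Sum>p\<in>E\<times>E. card {v\<in>V. v \<in> fst p \<and> v \<in> snd p})"
    using dc[OF finV, of "E\<times>E" "\<lambda>v p. v \<in> fst p \<and> v \<in> snd p"] finE by simp
  also have "\<dots> = (\<Sum>p\<in>E\<times>E. card (fst p \<inter> snd p))"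
  proof (rule sum.cong)
    fix p assume "p \<in> E\<times>E"
    hence "fst p \<subseteq> V" using edges by (cases p) auto
    hence "{v\<in>V. v \<in> fst p \<and> v \<in> snd p} = fst p \<inter> snd p" by blast
    thus "card {v\<in>V. v \<in> fst p \<and> v \<in> snd p} = card (fst p \<inter> snd p)" by simp
  qed simp
  finally show ?thesis .
qed

definition D where "D = {p\<in>E\<times>E. fst p \<inter> snd p = {}}"

lemma pointwise:
  assumes "x \<in> E" "y \<in> E"
  shows "(if x \<inter> y = {} then 1 else 0 :: int) = 1 - int (card (x \<inter> y)) + (if x = y then 1 else 0)"
proof -
  have cx: "card x = 2" "card y = 2" using edges assms by auto
  hence fx: "finite x" "finite y" by (auto intro: card_ge_0_finite)
  have le: "card (x \<inter> y) \<le> 2" using card_mono[OF fx(1), of "x \<inter> y"] cx by simp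
  consider "x \<inter> y = {}" | "x = y" | "x \<inter> y \<noteq> {}" "x \<noteq> y" by blast
  then show ?thesis
  proof cases
    case 1
    have "y \<noteq> {}" using cx(2) by force
    then show ?thesis using 1 by auto
  next
    case 2
    have "y \<noteq> {}" using cx(2) by force
    then show ?thesis using 2 cx by simp
  next
    case 3
    have "card (x \<inter> y) \<noteq> 0" using 3 fx by simp
    moreover have "card (x \<inter> y) \<noteq> 2"
    proof
      assume c2: "card (x \<inter> y) = 2"
      have "x \<inter> y = x" using card_subset_eq[OF fx(1), of "x \<inter> y"] c2 cx by auto
      moreover have "x \<inter> y = y" using card_subset_eq[OF fx(2), of "x \<inter> y"] c2 cx by auto
      ultimately show False using 3 by simp
    qed
    ultimately have "card (x \<inter> y) = 1" using le by linarith
    then show ?thesis using 3 by simp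
  qed
qed

lemma cardD: "int (card D) = int (card E)^2 + int (card E) - int (\<Sum>v\<in>V. deg E v * deg E v)"
proof -
  have fEE: "finite (E\<times>E)" using finE by simp
  have "int (card D) = (\<Sum>p\<in>E\<times>E. if fst p \<inter> snd p = {} then 1 else 0 :: int)"
    unfolding D_def using sum.inter_filter[OF fEE, of "\<lambda>_. 1::int" "\<lambda>p. fst p \<inter> snd p = {}"]
    by (simp add: sum.If_cases[OF fEE])
  also have "\<dots> = (\<Sum>p\<in>E\<times>E. 1 - int (card (fst p \<inter> snd p)) + (if fst p = snd p then 1 else 0))"
  proof (rule sum.cong)
    fix p assume "p \<in> E\<times>E"
    then show "(if fst p \<inter> snd p = {} then 1 else 0 :: int) = 1 - int (card (fst p \<inter> snd p)) + (if fst p = snd p then 1 else 0)"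
      using pointwise[of "fst p" "snd p"] by (cases p) simp
  qed simp
  also have "\<dots> = int (card E)^2 - (\<Sum>p\<in>E\<times>E. int (card (fst p \<inter> snd p))) + (\<Sum>p\<in>E\<times>E. if fst p = snd p then 1 else 0)"
    by (simp add: sum.distrib sum_subtractf card_cartesian_product power2_eq_square)
  finally have c1: "int (card D) = int (card E)^2 - (\<Sum>p\<in>E\<times>E. int (card (fst p \<inter> snd p))) + (\<Sum>p\<in>E\<times>E. if fst p = snd p then 1 else 0)" .
  have c2: "(\<Sum>p\<in>E\<times>E. if fst p = snd p then 1 else 0 :: int) = (\<Sum>x\<in>E. \<Sum>y\<in>E. if x = y then 1 else 0)"
    by (simp add: sum.cartesian_product split_def)
  have c3: "(\<Sum>x\<in>E. \<Sum>y\<in>E. if x = y then 1 else 0 :: int) = int (card E)" using finE by simp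
  have c4: "(\<Sum>p\<in>E\<times>E. int (card (fst p \<inter> snd p))) = int (\<Sum>v\<in>V. deg E v * deg E v)"
    by (simp only: sq_pairs of_nat_sum)
  show ?thesis using c1 c2 c3 c4 by linarith
qed

end


lemma cauchy_int:
  fixes f :: "'a \<Rightarrow> int"
  assumes "finite A"
  shows "(\<Sum>x\<in>A. f x)^2 \<le> int (card A) * (\<Sum>x\<in>A. (f x)^2)"
proof -
  have "0 \<le> (\<Sum>x\<in>A. \<Sum>y\<in>A. (f x - f y)^2)" by (intro sum_nonneg) auto
  also have "(\<Sum>x\<in>A. \<Sum>y\<in>A. (f x - f y)^2) = (\<Sum>x\<in>A. \<Sum>y\<in>A. (f x)^2 + (f y)^2 - 2 * f x * f y)"
    by (simp add: power2_diff)
  also have "\<dots> = (\<Sum>x\<in>A. int (card A) * (f x)^2 + (\<Sum>y\<in>A. (f y)^2) - 2 * f x * (\<Sum>y\<in>A. f y))"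
    by (simp add: sum.distrib sum_subtractf sum_distrib_left)
  also have "\<dots> = 2 * (int (card A) * (\<Sum>x\<in>A. (f x)^2)) - 2 * (\<Sum>x\<in>A. f x)^2"
    by (simp add: sum.distrib sum_subtractf sum_distrib_left sum_distrib_right power2_eq_square algebra_simps)
  finally show ?thesis by simp
qed

locale tfg = sg +
  assumes tf: "\<not> (\<exists>a b c. {a, b} \<in> E \<and> {b, c} \<in> E \<and> {a, c} \<in> E \<and> a \<noteq> b \<and> b \<noteq> c \<and> a \<noteq> c)"
begin

definition N where "N u = {y\<in>V. {u,y} \<in> E}"

lemma deg_N: "deg E u = card (N u)"
proof -
  have "{x\<in>E. u\<in>x} = (\<lambda>y. {u,y}) ` N u"
  proof
    show "(\<lambda>y. {u,y}) ` N u \<subseteq> {x\<in>E. u\<in>x}" unfolding N_def by auto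
    show "{x\<in>E. u\<in>x} \<subseteq> (\<lambda>y. {u,y}) ` N u"
    proof
      fix x assume x: "x \<in> {x\<in>E. u\<in>x}"
      have "card x = 2" using x edges by auto
      then obtain p q where pq: "x = {p,q}" "p \<noteq> q" unfolding card_2_iff by blast
      have "x \<subseteq> V" using x edges by auto
      show "x \<in> (\<lambda>y. {u,y}) ` N u"
      proof (cases "u = p")
        case True
        then show ?thesis using pq x \<open>x \<subseteq> V\<close> unfolding N_def by auto
      next
        case False
        hence "u = q" using x pq by auto
        hence "x = {u,p}" using pq by auto
        then show ?thesis using x \<open>x \<subseteq> V\<close> unfolding N_def by auto
      qed
    qed
  qed
  moreover have "inj_on (\<lambda>y. {u,y}) (N u)" by (auto simp: inj_on_def doubleton_eq_iff)
  ultimately show ?thesis unfolding deg_def by (simp add: card_image)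
qed

lemma deg_pair:
  assumes "{u,w} \<in> E"
  shows "deg E u + deg E w \<le> card V"
proof -
  have "u \<noteq> w" using edges[OF assms] by auto
  have "N u \<inter> N w = {}"
  proof (rule ccontr)
    assume "N u \<inter> N w \<noteq> {}"
    then obtain y where y: "{u,y} \<in> E" "{w,y} \<in> E" unfolding N_def by auto
    have "y \<noteq> u" using edges[OF y(1)] by auto
    moreover have "y \<noteq> w" using edges[OF y(2)] by auto
    ultimately show False using tf assms y \<open>u \<noteq> w\<close> by blast
  qed
  moreover have "N u \<union> N w \<subseteq> V" unfolding N_def by auto
  moreover have "finite (N u)" "finite (N w)" unfolding N_def using finV by auto
  ultimately have "card (N u) + card (N w) \<le> card V"
    by (metis card_Un_disjoint card_mono finV)
  thus ?thesis by (simp add: deg_N)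
qed

lemma S_le: "(\<Sum>v\<in>V. deg E v * deg E v) \<le> card V * card E"
proof -
  have "(\<Sum>v\<in>V. deg E v * deg E v) = (\<Sum>x\<in>E. \<Sum>v\<in>x. deg E v)" by (rule sq_edges)
  also have "\<dots> \<le> (\<Sum>x\<in>E. card V)"
  proof (rule sum_mono)
    fix x assume x: "x \<in> E"
    have "card x = 2" using x edges by auto
    then obtain p q where pq: "x = {p,q}" "p \<noteq> q" unfolding card_2_iff by blast
    show "(\<Sum>v\<in>x. deg E v) \<le> card V" using deg_pair[of p q] x pq by simp
  qed
  finally show ?thesis by (simp add: mult.commute)
qed

lemma main_ineqs:
  fixes a :: int
  defines "e \<equiv> int (card E)" and "S \<equiv> int (\<Sum>v\<in>V. deg E v * deg E v)" and "n \<equiv> int (card V)"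
  shows "4*e^2 \<le> n*S" "S \<le> n*e" "2*e \<le> S" "(2*a+1)*(2*e) - n*a*(a+1) \<le> S"
proof -
  have hs: "(\<Sum>v\<in>V. int (deg E v)) = 2*e" unfolding e_def using handshake
    by (metis of_nat_mult of_nat_numeral of_nat_sum)
  have Sd: "S = (\<Sum>v\<in>V. (int (deg E v))^2)" unfolding S_def by (simp add: power2_eq_square)
  show "4*e^2 \<le> n*S" using cauchy_int[OF finV, of "\<lambda>v. int (deg E v)"] hs Sd unfolding n_def
    by (simp add: power2_eq_square)
  show "S \<le> n*e" using S_le unfolding S_def n_def e_def by (metis of_nat_le_iff of_nat_mult)
  have "(\<Sum>v\<in>V. int (deg E v)) \<le> (\<Sum>v\<in>V. (int (deg E v))^2)"
  proof (rule sum_mono)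
    fix v
    have "deg E v \<le> deg E v * deg E v" by (cases "deg E v") auto
    thus "int (deg E v) \<le> (int (deg E v))^2" unfolding power2_eq_square by (metis of_nat_le_iff of_nat_mult)
  qed
  thus "2*e \<le> S" using hs Sd by simp
  have "0 \<le> (\<Sum>v\<in>V. (int (deg E v) - a) * (int (deg E v) - a - 1))"
  proof (rule sum_nonneg)
    fix v
    show "0 \<le> (int (deg E v) - a) * (int (deg E v) - a - 1)"
      by (cases "int (deg E v) - a \<ge> 1") (auto intro: mult_nonneg_nonneg mult_nonpos_nonpos)
  qed
  also have "(\<Sum>v\<in>V. (int (deg E v) - a) * (int (deg E v) - a - 1))
     = (\<Sum>v\<in>V. (int (deg E v))^2) - (2*a+1) * (\<Sum>v\<in>V. int (deg E v)) + n*a*(a+1)"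
    unfolding n_def by (simp add: algebra_simps power2_eq_square sum.distrib sum_subtractf sum_distrib_left)
  finally show "(2*a+1)*(2*e) - n*a*(a+1) \<le> S" using hs Sd by simp
qed

end


lemma T2_edge:
  "{u,v} \<in> snd (T2 n) \<longleftrightarrow> u < n \<and> v < n \<and> (u < n div 2 \<longleftrightarrow> n div 2 \<le> v)"
proof
  assume "{u,v} \<in> snd (T2 n)"
  then obtain a b where ab: "{u,v} = {a,b}" "a < n div 2" "n div 2 \<le> b" "b < n"
    unfolding T2_def by auto
  thus "u < n \<and> v < n \<and> (u < n div 2 \<longleftrightarrow> n div 2 \<le> v)"
    by (auto simp: doubleton_eq_iff)
next
  assume h: "u < n \<and> v < n \<and> (u < n div 2 \<longleftrightarrow> n div 2 \<le> v)"
  show "{u,v} \<in> snd (T2 n)"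
  proof (cases "u < n div 2")
    case True
    then show ?thesis using h unfolding T2_def by auto
  next
    case False
    hence "{u,v} = {v,u} \<and> v < n div 2 \<and> n div 2 \<le> u \<and> u < n" using h by auto
    then show ?thesis unfolding T2_def snd_conv mem_Collect_eq by blast
  qed
qed

lemma T2_fst: "fst (T2 n) = {0..<n}" unfolding T2_def by simp

lemma T2_edges_form: "x \<in> snd (T2 n) \<Longrightarrow> \<exists>u v. x = {u,v} \<and> u < n div 2 \<and> n div 2 \<le> v \<and> v < n"
  unfolding T2_def by auto

lemma T2_sg: "sg {0..<n} (snd (T2 n))"
proof
  show "finite {0..<n}" by simp
  fix x assume "x \<in> snd (T2 n)"
  then obtain u v where "x = {u,v}" "u < n div 2" "n div 2 \<le> v" "v < n"
    using T2_edges_form by blast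
  thus "card x = 2 \<and> x \<subseteq> {0..<n}" by auto
qed

lemma T2_simple: "simple_graph (T2 n)"
  using T2_sg[of n] unfolding simple_graph_def sg_def T2_fst by (simp add: T2_fst)

lemma T2_tf_raw: "\<not> (\<exists>a b c. {a, b} \<in> snd (T2 n) \<and> {b, c} \<in> snd (T2 n) \<and> {a, c} \<in> snd (T2 n) \<and> a \<noteq> b \<and> b \<noteq> c \<and> a \<noteq> c)"
  unfolding T2_edge by auto

lemma T2_tf: "triangle_free (T2 n)"
  using T2_tf_raw unfolding triangle_free_def by blast

lemma T2_tfg: "tfg {0..<n} (snd (T2 n))"
  using T2_sg T2_tf_raw by (simp add: tfg_def tfg_axioms_def)

lemma T2_deg:
  assumes "v < n"
  shows "deg (snd (T2 n)) v = (if v < n div 2 then n - n div 2 else n div 2)"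
proof -
  interpret tfg "{0..<n}" "snd (T2 n)" by (rule T2_tfg)
  have "N v = (if v < n div 2 then {n div 2..<n} else {0..<n div 2})"
    unfolding N_def T2_edge using assms by auto
  thus ?thesis by (simp add: deg_N)
qed

lemma T2_counts:
  fixes n :: nat
  defines "h \<equiv> n div 2"
  shows "card (snd (T2 n)) = h * (n - h)"
    and "(\<Sum>v\<in>{0..<n}. deg (snd (T2 n)) v * deg (snd (T2 n)) v) = h * (n - h) * n"
proof -
  interpret tfg "{0..<n}" "snd (T2 n)" by (rule T2_tfg)
  have hn: "h \<le> n" unfolding h_def by simp
  have split: "\<And>f::nat\<Rightarrow>nat. (\<Sum>v\<in>{0..<n}. f v) = (\<Sum>v\<in>{0..<h}. f v) + (\<Sum>v\<in>{h..<n}. f v)"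
    using hn by (simp add: sum.atLeastLessThan_concat)
  have d1: "\<And>f::nat\<Rightarrow>nat. (\<Sum>v\<in>{0..<h}. f (deg (snd (T2 n)) v)) = h * f (n - h)"
    using T2_deg hn unfolding h_def by simp
  have d2: "\<And>f::nat\<Rightarrow>nat. (\<Sum>v\<in>{h..<n}. f (deg (snd (T2 n)) v)) = (n - h) * f h"
    using T2_deg hn unfolding h_def by simp
  have "2 * card (snd (T2 n)) = h * (n - h) + (n - h) * h"
    using handshake split[of "deg (snd (T2 n))"] d1[of id] d2[of id] by simp
  moreover have "(n - h) * h = h * (n - h)" by (rule mult.commute)
  ultimately show "card (snd (T2 n)) = h * (n - h)" by linarith
  have "(\<Sum>v\<in>{0..<n}. deg (snd (T2 n)) v * deg (snd (T2 n)) v) = h * ((n-h)*(n-h)) + (n - h) * (h*h)"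
    using split[of "\<lambda>v. deg (snd (T2 n)) v * deg (snd (T2 n)) v"] d1[of "\<lambda>x. x*x"] d2[of "\<lambda>x. x*x"] by simp
  also have "\<dots> = h * (n - h) * n"
  proof -
    define m where "m = n - h"
    have nm: "n = h + m" using hn m_def by simp
    show ?thesis unfolding m_def[symmetric] unfolding nm by (simp add: algebra_simps)
  qed
  finally show "(\<Sum>v\<in>{0..<n}. deg (snd (T2 n)) v * deg (snd (T2 n)) v) = h * (n - h) * n" .
qed


lemma five: "{0..<5::nat} = {0,1,2,3,4}" by auto

lemma iso_M:
  "graph_iso graph_M (V',E') \<longleftrightarrow>
     (\<exists>a b c d z. distinct [a,b,c,d,z] \<and> V' = {a,b,c,d,z} \<and> E' = {{a,b},{c,d}})"
proof
  assume "graph_iso graph_M (V',E')"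
  then obtain f where f: "bij_betw f {0,1,2,3,4::nat} V'" "E' = (\<lambda>e. f ` e) ` {{0,1},{2,3}}"
    unfolding graph_iso_def graph_M_def five by auto
  have "inj_on f (set [0,1,2,3,4::nat])" using f(1) by (simp add: bij_betw_def)
  hence "distinct (map f [0,1,2,3,4::nat])" by (simp add: distinct_map)
  moreover have "V' = {f 0, f 1, f 2, f 3, f 4}" using f(1) by (auto simp: bij_betw_def)
  moreover have "E' = {{f 0, f 1}, {f 2, f 3}}" using f(2) by simp
  ultimately show "\<exists>a b c d z. distinct [a,b,c,d,z] \<and> V' = {a,b,c,d,z} \<and> E' = {{a,b},{c,d}}"
    by (intro exI[of _ "f 0"] exI[of _ "f 1"] exI[of _ "f 2"] exI[of _ "f 3"] exI[of _ "f 4"]) simp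
next
  assume "\<exists>a b c d z. distinct [a,b,c,d,z] \<and> V' = {a,b,c,d,z} \<and> E' = {{a,b},{c,d}}"
  then obtain a b c d z where h: "distinct [a,b,c,d,z]" "V' = {a,b,c,d,z}" "E' = {{a,b},{c,d}}" by blast
  let ?f = "(!) [a,b,c,d,z]"
  have "bij_betw ?f {..<length [a,b,c,d,z]} (set [a,b,c,d,z])" by (rule bij_betw_nth[OF h(1)]) auto
  moreover have "{..<length [a,b,c,d,z]} = {0..<5::nat}" by auto
  ultimately have "bij_betw ?f {0..<5} V'" using h(2) by simp
  moreover have "E' = (\<lambda>e. ?f ` e) ` {{0,1},{2,3}}" using h(3) by simp
  ultimately show "graph_iso graph_M (V',E')" unfolding graph_iso_def graph_M_def by auto
qed

lemma iso_M':
  "graph_iso graph_M' (V',E') \<longleftrightarrow>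
     (\<exists>a b c d z. distinct [a,b,c,d,z] \<and> V' = {a,b,c,d,z} \<and> E' = {{a,b},{b,c},{d,z}})"
proof
  assume "graph_iso graph_M' (V',E')"
  then obtain f where f: "bij_betw f {0,1,2,3,4::nat} V'" "E' = (\<lambda>e. f ` e) ` {{0,1},{1,2},{3,4}}"
    unfolding graph_iso_def graph_M'_def five by auto
  have "inj_on f (set [0,1,2,3,4::nat])" using f(1) by (simp add: bij_betw_def)
  hence "distinct (map f [0,1,2,3,4::nat])" by (simp add: distinct_map)
  moreover have "V' = {f 0, f 1, f 2, f 3, f 4}" using f(1) by (auto simp: bij_betw_def)
  moreover have "E' = {{f 0, f 1}, {f 1, f 2}, {f 3, f 4}}" using f(2) by simp
  ultimately show "\<exists>a b c d z. distinct [a,b,c,d,z] \<and> V' = {a,b,c,d,z} \<and> E' = {{a,b},{b,c},{d,z}}"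
    by (intro exI[of _ "f 0"] exI[of _ "f 1"] exI[of _ "f 2"] exI[of _ "f 3"] exI[of _ "f 4"]) simp
next
  assume "\<exists>a b c d z. distinct [a,b,c,d,z] \<and> V' = {a,b,c,d,z} \<and> E' = {{a,b},{b,c},{d,z}}"
  then obtain a b c d z where h: "distinct [a,b,c,d,z]" "V' = {a,b,c,d,z}" "E' = {{a,b},{b,c},{d,z}}" by blast
  let ?f = "(!) [a,b,c,d,z]"
  have "bij_betw ?f {..<length [a,b,c,d,z]} (set [a,b,c,d,z])" by (rule bij_betw_nth[OF h(1)]) auto
  moreover have "{..<length [a,b,c,d,z]} = {0..<5::nat}" by auto
  ultimately have "bij_betw ?f {0..<5} V'" using h(2) by simp
  moreover have "E' = (\<lambda>e. ?f ` e) ` {{0,1},{1,2},{3,4}}" using h(3) by simp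
  ultimately show "graph_iso graph_M' (V',E')" unfolding graph_iso_def graph_M'_def by auto
qed

definition CM :: "'a graph \<Rightarrow> ('a set \<times> 'a set set) set" where
  "CM G = {(V', E'). V' \<subseteq> fst G \<and> E' \<subseteq> snd G \<and> (\<forall>e\<in>E'. e \<subseteq> V') \<and> graph_iso graph_M (V', E')}"

definition CM' :: "'a graph \<Rightarrow> ('a set \<times> 'a set set) set" where
  "CM' G = {(V', E'). V' \<subseteq> fst G \<and> E' \<subseteq> snd G \<and> (\<forall>e\<in>E'. e \<subseteq> V') \<and> graph_iso graph_M' (V', E')}"

lemma count_CM: "count_copies graph_M G = card (CM G)"
  unfolding count_copies_def CM_def ..

lemma count_CM': "count_copies graph_M' G = card (CM' G)"
  unfolding count_copies_def CM'_def ..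


context sg
begin

lemma CM_iff:
  "(V',E') \<in> CM (V,E) \<longleftrightarrow> (\<exists>a b c d z. distinct [a,b,c,d,z] \<and> V' = {a,b,c,d,z} \<and> E' = {{a,b},{c,d}}
      \<and> {a,b} \<in> E \<and> {c,d} \<in> E \<and> z \<in> V)"
proof
  assume "(V',E') \<in> CM (V,E)"
  hence h: "V' \<subseteq> V" "E' \<subseteq> E" "graph_iso graph_M (V',E')" unfolding CM_def by auto
  from h(3) obtain a b c d z where g: "distinct [a,b,c,d,z]" "V' = {a,b,c,d,z}" "E' = {{a,b},{c,d}}"
    unfolding iso_M by (elim exE conjE) (rule that)
  have "{a,b} \<in> E" "{c,d} \<in> E" "z \<in> V" using h(1,2) g(2,3) by auto
  thus "\<exists>a b c d z. distinct [a,b,c,d,z] \<and> V' = {a,b,c,d,z} \<and> E' = {{a,b},{c,d}}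
      \<and> {a,b} \<in> E \<and> {c,d} \<in> E \<and> z \<in> V" using g
    by (intro exI[of _ a] exI[of _ b] exI[of _ c] exI[of _ d] exI[of _ z]) simp
next
  assume "\<exists>a b c d z. distinct [a,b,c,d,z] \<and> V' = {a,b,c,d,z} \<and> E' = {{a,b},{c,d}}
      \<and> {a,b} \<in> E \<and> {c,d} \<in> E \<and> z \<in> V"
  then obtain a b c d z where h: "distinct [a,b,c,d,z]" "V' = {a,b,c,d,z}" "E' = {{a,b},{c,d}}"
      "{a,b} \<in> E" "{c,d} \<in> E" "z \<in> V" by (elim exE conjE) (rule that)
  have "{a,b} \<subseteq> V" "{c,d} \<subseteq> V" using edges h(4,5) by auto
  hence "V' \<subseteq> V" using h by auto
  moreover have "graph_iso graph_M (V',E')" unfolding iso_M using h(1,2,3)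
    by (intro exI[of _ a] exI[of _ b] exI[of _ c] exI[of _ d] exI[of _ z]) simp
  moreover have "E' \<subseteq> E" "\<forall>e\<in>E'. e \<subseteq> V'" using h by auto
  ultimately show "(V',E') \<in> CM (V,E)" unfolding CM_def by simp
qed

lemma CM'_iff:
  "(V',E') \<in> CM' (V,E) \<longleftrightarrow> (\<exists>a b c d z. distinct [a,b,c,d,z] \<and> V' = {a,b,c,d,z} \<and> E' = {{a,b},{b,c},{d,z}}
      \<and> {a,b} \<in> E \<and> {b,c} \<in> E \<and> {d,z} \<in> E)"
proof
  assume "(V',E') \<in> CM' (V,E)"
  hence h: "V' \<subseteq> V" "E' \<subseteq> E" "graph_iso graph_M' (V',E')" unfolding CM'_def by auto
  from h(3) obtain a b c d z where g: "distinct [a,b,c,d,z]" "V' = {a,b,c,d,z}" "E' = {{a,b},{b,c},{d,z}}"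
    unfolding iso_M' by (elim exE conjE) (rule that)
  have "{a,b} \<in> E" "{b,c} \<in> E" "{d,z} \<in> E" using h(2) g(3) by auto
  thus "\<exists>a b c d z. distinct [a,b,c,d,z] \<and> V' = {a,b,c,d,z} \<and> E' = {{a,b},{b,c},{d,z}}
      \<and> {a,b} \<in> E \<and> {b,c} \<in> E \<and> {d,z} \<in> E" using g
    by (intro exI[of _ a] exI[of _ b] exI[of _ c] exI[of _ d] exI[of _ z]) simp
next
  assume "\<exists>a b c d z. distinct [a,b,c,d,z] \<and> V' = {a,b,c,d,z} \<and> E' = {{a,b},{b,c},{d,z}}
      \<and> {a,b} \<in> E \<and> {b,c} \<in> E \<and> {d,z} \<in> E"
  then obtain a b c d z where h: "distinct [a,b,c,d,z]" "V' = {a,b,c,d,z}" "E' = {{a,b},{b,c},{d,z}}"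
      "{a,b} \<in> E" "{b,c} \<in> E" "{d,z} \<in> E" by (elim exE conjE) (rule that)
  have "{a,b} \<subseteq> V" "{b,c} \<subseteq> V" "{d,z} \<subseteq> V" using edges h(4,5,6) by auto
  hence "V' \<subseteq> V" using h by auto
  moreover have "graph_iso graph_M' (V',E')" unfolding iso_M' using h(1,2,3)
    by (intro exI[of _ a] exI[of _ b] exI[of _ c] exI[of _ d] exI[of _ z]) simp
  moreover have "E' \<subseteq> E" "\<forall>e\<in>E'. e \<subseteq> V'" using h by auto
  ultimately show "(V',E') \<in> CM' (V,E)" unfolding CM'_def by simp
qed

lemma fin_CM: "finite (CM (V,E))"
proof -
  have "CM (V,E) \<subseteq> Pow V \<times> Pow E" unfolding CM_def by auto
  thus ?thesis using finV finE by (meson finite_Pow_iff finite_SigmaI finite_subset)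
qed

lemma fin_CM': "finite (CM' (V,E))"
proof -
  have "CM' (V,E) \<subseteq> Pow V \<times> Pow E" unfolding CM'_def by auto
  thus ?thesis using finV finE by (meson finite_Pow_iff finite_SigmaI finite_subset)
qed

definition Tr where "Tr = Sigma D (\<lambda>p. V - (fst p \<union> snd p))"
definition phi where "phi t = (insert (snd t) (fst (fst t) \<union> snd (fst t)), {fst (fst t), snd (fst t)})"

lemma fin_D: "finite D" unfolding D_def using finE by simp

lemma card_Tr: "card Tr = card D * (card V - 4)"
proof -
  have "card Tr = (\<Sum>p\<in>D. card (V - (fst p \<union> snd p)))"
    unfolding Tr_def using fin_D finV by (simp add: card_SigmaI)
  also have "\<dots> = (\<Sum>p\<in>D. card V - 4)"
  proof (rule sum.cong)
    fix p assume "p \<in> D"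
    then obtain x y where p: "p = (x,y)" "x \<in> E" "y \<in> E" "x \<inter> y = {}" unfolding D_def by auto
    have "card x = 2" "card y = 2" "x \<subseteq> V" "y \<subseteq> V" using edges p by auto
    moreover hence "finite x" "finite y" using finV finite_subset by auto
    ultimately have "card (x \<union> y) = 4" using p(4) by (simp add: card_Un_disjoint)
    moreover have "x \<union> y \<subseteq> V" using \<open>x \<subseteq> V\<close> \<open>y \<subseteq> V\<close> by auto
    moreover have "finite (x \<union> y)" using \<open>finite x\<close> \<open>finite y\<close> by simp
    ultimately have "card (V - (x \<union> y)) = card V - 4" using card_Diff_subset by metis
    thus "card (V - (fst p \<union> snd p)) = card V - 4" using p by simp
  qed simp
  finally show ?thesis by simp
qed

lemma phi_in: "t \<in> Tr \<Longrightarrow> phi t \<in> CM (V,E)"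
proof -
  assume "t \<in> Tr"
  then obtain p z where pz: "t = (p,z)" "p \<in> D" "z \<in> V - (fst p \<union> snd p)"
    unfolding Tr_def by blast
  then obtain x y where "p = (x,y)" by (cases p)
  hence t: "t = ((x,y),z)" "x \<in> E" "y \<in> E" "x \<inter> y = {}" "z \<in> V" "z \<notin> x" "z \<notin> y"
    using pz unfolding D_def by auto
  obtain a b where ab: "x = {a,b}" "a \<noteq> b" using edges[OF t(2)] unfolding card_2_iff by blast
  obtain c d where cd: "y = {c,d}" "c \<noteq> d" using edges[OF t(3)] unfolding card_2_iff by blast
  have "distinct [a,b,c,d,z]" using ab cd t by auto
  moreover have "insert z (x \<union> y) = {a,b,c,d,z}" using ab cd by auto
  ultimately have ph: "phi t = ({a,b,c,d,z}, {{a,b},{c,d}})" "distinct [a,b,c,d,z]"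
    unfolding phi_def using t(1) ab cd by simp_all
  have "{a,b} \<in> E" "{c,d} \<in> E" using t(2,3) ab cd by simp_all
  thus "phi t \<in> CM (V,E)" unfolding ph(1) CM_iff using ph(2) t(5)
    by (intro exI[of _ a] exI[of _ b] exI[of _ c] exI[of _ d] exI[of _ z]) simp
qed

lemma fiber_Tr: "t \<in> Tr \<Longrightarrow> card {c\<in>CM (V,E). c = phi t} = 1"
proof -
  assume "t \<in> Tr"
  hence "{c\<in>CM (V,E). c = phi t} = {phi t}" using phi_in[OF \<open>t \<in> Tr\<close>] by auto
  thus ?thesis by simp
qed

lemma fiber_CM: "cp \<in> CM (V,E) \<Longrightarrow> card {t\<in>Tr. cp = phi t} = 2"
proof -
  assume "cp \<in> CM (V,E)"
  then obtain V' E' where cp: "cp = (V',E')" "(V',E') \<in> CM (V,E)" by (cases cp) auto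
  from cp(2) obtain a b c d z where h: "distinct [a,b,c,d,z]" "V' = {a,b,c,d,z}" "E' = {{a,b},{c,d}}"
      "{a,b} \<in> E" "{c,d} \<in> E" "z \<in> V" unfolding CM_iff by blast
  let ?t1 = "(({a,b},{c,d}),z)" and ?t2 = "(({c,d},{a,b}),z)"
  have "{t\<in>Tr. (V',E') = phi t} = {?t1, ?t2}"
  proof
    have dis: "{a,b} \<inter> {c,d} = {}" "z \<notin> {a,b}" "z \<notin> {c,d}" using h(1) by auto
    have ins: "insert z ({a,b} \<union> {c,d}) = V'" "insert z ({c,d} \<union> {a,b}) = V'" using h(2) by auto
    have "?t1 \<in> Tr" "?t2 \<in> Tr" using dis h(4,5,6) unfolding Tr_def D_def by auto
    moreover have "phi ?t1 = (V',E')" "phi ?t2 = (V',E')" unfolding phi_def using ins h(3)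
      by (auto simp: insert_commute)
    ultimately show "{?t1, ?t2} \<subseteq> {t\<in>Tr. (V',E') = phi t}" by auto
    show "{t\<in>Tr. (V',E') = phi t} \<subseteq> {?t1, ?t2}"
    proof
      fix t assume t: "t \<in> {t\<in>Tr. (V',E') = phi t}"
      then obtain p w where pz: "t = (p,w)" "p \<in> D" "w \<in> V - (fst p \<union> snd p)"
        unfolding Tr_def by blast
      then obtain x y where "p = (x,y)" by (cases p)
      hence tt: "t = ((x,y),w)" "w \<notin> x" "w \<notin> y" using pz by auto
      have "phi t = (insert w (x \<union> y), {x,y})" unfolding phi_def tt(1) by simp
      hence "(V',E') = (insert w (x \<union> y), {x,y})" using t by simp
      hence vv: "V' = insert w (x \<union> y)" "E' = {x,y}" by simp_all
      have e: "{x,y} = {{a,b},{c,d}}" "insert w (x \<union> y) = {a,b,c,d,z}"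
        using vv h(2,3) by simp_all
      hence xy: "(x = {a,b} \<and> y = {c,d}) \<or> (x = {c,d} \<and> y = {a,b})"
        by (auto simp: doubleton_eq_iff)
      hence "x \<union> y = {a,b,c,d}" by auto
      hence "w = z" using e(2) tt h by auto
      thus "t \<in> {?t1, ?t2}" using xy tt by auto
    qed
  qed
  moreover have "?t1 \<noteq> ?t2" using h by (auto simp: doubleton_eq_iff)
  ultimately show ?thesis using cp by simp
qed

lemma count_M_formula: "2 * card (CM (V,E)) = card D * (card V - 4)"
proof -
  have fT: "finite Tr" unfolding Tr_def using fin_D finV by simp
  have "(\<Sum>t\<in>Tr. card {c\<in>CM (V,E). c = phi t}) = (\<Sum>c\<in>CM (V,E). card {t\<in>Tr. c = phi t})"
    by (rule dc[OF fT fin_CM])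
  also have "(\<Sum>t\<in>Tr. card {c\<in>CM (V,E). c = phi t}) = card Tr"
    using fiber_Tr by simp
  also have "(\<Sum>c\<in>CM (V,E). card {t\<in>Tr. c = phi t}) = 2 * card (CM (V,E))"
    using fiber_CM by simp
  finally show ?thesis using card_Tr by simp
qed

end


definition Qr :: "('a set \<times> 'a set set) \<Rightarrow> ('a set \<times> 'a set set) \<Rightarrow> bool" where
  "Qr c' c \<longleftrightarrow> fst c = fst c' \<and> snd c \<subseteq> snd c'"

lemma pick3:
  assumes "X \<in> {A,B,C}" "Y \<in> {A,B,C}" "X \<inter> Y = {}" "X \<noteq> {}" "A \<inter> B \<noteq> {}"
  shows "{X,Y} = {A,C} \<or> {X,Y} = {B,C}"
  using assms(1,2) apply (elim insertE emptyE)
  using assms(3-5) by (simp_all add: insert_commute Int_commute)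

context sg
begin

lemma fiber_CM':
  assumes "cp \<in> CM' (V,E)"
  shows "card {c\<in>CM (V,E). Qr cp c} = 2"
proof -
  obtain V' E' where cp: "cp = (V',E')" by (cases cp)
  from assms[unfolded cp] obtain a b c d z where h: "distinct [a,b,c,d,z]" "V' = {a,b,c,d,z}"
      "E' = {{a,b},{b,c},{d,z}}" "{a,b} \<in> E" "{b,c} \<in> E" "{d,z} \<in> E"
    unfolding CM'_iff by (elim exE conjE) (rule that)
  have cV: "c \<in> V" "a \<in> V" using edges[OF h(5)] edges[OF h(4)] by auto
  let ?c1 = "(V', {{a,b},{d,z}})" and ?c2 = "(V', {{b,c},{d,z}})"
  have s1: "V' = {a,b,d,z,c}" "distinct [a,b,d,z,c]" using h(1,2) by auto
  have s2: "V' = {b,c,d,z,a}" "distinct [b,c,d,z,a]" using h(1,2) by auto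
  have c1: "?c1 \<in> CM (V,E)" unfolding CM_iff using s1 h(4,6) cV
    by (intro exI[of _ a] exI[of _ b] exI[of _ d] exI[of _ z] exI[of _ c]) simp
  have c2: "?c2 \<in> CM (V,E)" unfolding CM_iff using s2 h(5,6) cV
    by (intro exI[of _ b] exI[of _ c] exI[of _ d] exI[of _ z] exI[of _ a]) simp
  have "{c\<in>CM (V,E). Qr cp c} = {?c1, ?c2}"
  proof
    have "Qr cp ?c1" "Qr cp ?c2" unfolding Qr_def cp h(3) by simp_all
    thus "{?c1, ?c2} \<subseteq> {c\<in>CM (V,E). Qr cp c}" using c1 c2 by simp
    show "{c\<in>CM (V,E). Qr cp c} \<subseteq> {?c1, ?c2}"
    proof
      fix cc assume cc: "cc \<in> {c\<in>CM (V,E). Qr cp c}"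
      obtain V'' E'' where cc2: "cc = (V'',E'')" by (cases cc)
      have q: "V'' = V'" "E'' \<subseteq> E'" using cc unfolding cc2 cp Qr_def by auto
      have "(V'',E'') \<in> CM (V,E)" using cc cc2 by simp
      then obtain p q r s t where g: "distinct [p,q,r,s,t]" "E'' = {{p,q},{r,s}}"
        unfolding CM_iff by (elim exE conjE) (rule that)
      have pq: "{p,q} \<in> E''" "{r,s} \<in> E''" unfolding g(2) by simp_all
      have "{p,q} \<in> {{a,b},{b,c},{d,z}}" "{r,s} \<in> {{a,b},{b,c},{d,z}}"
        using subsetD[OF q(2) pq(1)] subsetD[OF q(2) pq(2)] unfolding h(3) .
      moreover have "{p,q} \<inter> {r,s} = {}" "{p,q} \<noteq> {}" using g(1) by auto
      moreover have "{a,b} \<inter> {b,c} \<noteq> {}" by auto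
      ultimately have "E'' = {{a,b},{d,z}} \<or> E'' = {{b,c},{d,z}}"
        unfolding g(2) by (rule pick3)
      thus "cc \<in> {?c1, ?c2}" using cc2 q(1) by (elim disjE) simp_all
    qed
  qed
  moreover have "?c1 \<noteq> ?c2"
  proof -
    have "{a,b} \<noteq> {b,c}" "{a,b} \<noteq> {d,z}" using h(1) by (auto simp: doubleton_eq_iff)
    show ?thesis
    proof
      assume "?c1 = ?c2"
      hence "{{a,b},{d,z}} = {{b,c},{d,z}}" by simp
      hence "{a,b} \<in> {{b,c},{d,z}}" by (metis insertI1)
      thus False using \<open>{a,b} \<noteq> {b,c}\<close> \<open>{a,b} \<noteq> {d,z}\<close> by simp
    qed
  qed
  ultimately show ?thesis by simp
qed

lemma mk':
  assumes "distinct [a,b,c,d,z]" "{a,b} \<in> E" "{c,d} \<in> E" "{z,x} \<in> E" "x \<in> {a,b,c,d}"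
  shows "({a,b,c,d,z}, {{a,b},{c,d},{z,x}}) \<in> CM' (V,E)"
proof -
  have ab: "{b,a} = {a,b}" "{d,c} = {c,d}" by auto
  consider "x = a" | "x = b" | "x = c" | "x = d" using assms(5) by auto
  then show ?thesis
  proof cases
    case 1
    have "{a,b,c,d,z} = {b,a,z,c,d}" "{{a,b},{c,d},{z,x}} = {{b,a},{a,z},{c,d}}" using 1 by auto
    moreover have "distinct [b,a,z,c,d]" using assms(1) by auto
    ultimately show ?thesis unfolding CM'_iff using assms(2,3,4) 1 ab
      by (intro exI[of _ b] exI[of _ a] exI[of _ z] exI[of _ c] exI[of _ d]) (simp add: insert_commute)
  next
    case 2
    have "{a,b,c,d,z} = {a,b,z,c,d}" "{{a,b},{c,d},{z,x}} = {{a,b},{b,z},{c,d}}" using 2 by auto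
    moreover have "distinct [a,b,z,c,d]" using assms(1) by auto
    ultimately show ?thesis unfolding CM'_iff using assms(2,3,4) 2 ab
      by (intro exI[of _ a] exI[of _ b] exI[of _ z] exI[of _ c] exI[of _ d]) (simp add: insert_commute)
  next
    case 3
    have "{a,b,c,d,z} = {d,c,z,a,b}" "{{a,b},{c,d},{z,x}} = {{d,c},{c,z},{a,b}}" using 3 by auto
    moreover have "distinct [d,c,z,a,b]" using assms(1) by auto
    ultimately show ?thesis unfolding CM'_iff using assms(2,3,4) 3 ab
      by (intro exI[of _ d] exI[of _ c] exI[of _ z] exI[of _ a] exI[of _ b]) (simp add: insert_commute)
  next
    case 4
    have "{a,b,c,d,z} = {c,d,z,a,b}" "{{a,b},{c,d},{z,x}} = {{c,d},{d,z},{a,b}}" using 4 by auto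
    moreover have "distinct [c,d,z,a,b]" using assms(1) by auto
    ultimately show ?thesis unfolding CM'_iff using assms(2,3,4) 4 ab
      by (intro exI[of _ c] exI[of _ d] exI[of _ z] exI[of _ a] exI[of _ b]) (simp add: insert_commute)
  qed
qed

end


context tfg
begin

lemma no_two:
  assumes "{u,v} \<in> E" "{z,u} \<in> E" "{z,v} \<in> E" "z \<noteq> u" "z \<noteq> v" "u \<noteq> v"
  shows False
proof -
  have "{v,z} \<in> E" using assms(3) by (simp add: insert_commute)
  hence "{u, v} \<in> E \<and> {v, z} \<in> E \<and> {u, z} \<in> E \<and> u \<noteq> v \<and> v \<noteq> z \<and> u \<noteq> z"
    using assms by (simp add: insert_commute)
  thus False using tf by blast
qed

lemma card_le1:
  assumes "{u,v} \<in> E" "z \<noteq> u" "z \<noteq> v" "u \<noteq> v"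
  shows "card ({x\<in>{a,b,c,d}. {z,x} \<in> E} \<inter> {u,v}) \<le> 1"
proof (cases "{z,u} \<in> E")
  case True
  hence "{z,v} \<notin> E" using no_two assms by blast
  hence s: "{x\<in>{a,b,c,d}. {z,x} \<in> E} \<inter> {u,v} \<subseteq> {u}" by auto
  show ?thesis using card_mono[OF _ s] by simp
next
  case False
  hence s: "{x\<in>{a,b,c,d}. {z,x} \<in> E} \<inter> {u,v} \<subseteq> {v}" by auto
  show ?thesis using card_mono[OF _ s] by simp
qed

lemma fiber_CM_le:
  assumes "cp \<in> CM (V,E)"
  shows "card {c'\<in>CM' (V,E). Qr c' cp} \<le> 2"
proof -
  obtain V' E'' where cp: "cp = (V',E'')" by (cases cp)
  from assms[unfolded cp] obtain a b c d z where h: "distinct [a,b,c,d,z]" "V' = {a,b,c,d,z}"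
      "E'' = {{a,b},{c,d}}" "{a,b} \<in> E" "{c,d} \<in> E" "z \<in> V"
    unfolding CM_iff by (elim exE conjE) (rule that)
  define X where "X = {x\<in>{a,b,c,d}. {z,x} \<in> E}"
  have sub: "{c'\<in>CM' (V,E). Qr c' cp} \<subseteq> (\<lambda>x. (V', {{a,b},{c,d},{z,x}})) ` X"
  proof
    fix c' assume c': "c' \<in> {c'\<in>CM' (V,E). Qr c' cp}"
    obtain V'' E' where c'2: "c' = (V'',E')" by (cases c')
    have q: "V' = V''" "E'' \<subseteq> E'" using c' unfolding c'2 cp Qr_def by auto
    have "(V'',E') \<in> CM' (V,E)" using c' c'2 by simp
    then obtain p q r s t where g: "distinct [p,q,r,s,t]" "V'' = {p,q,r,s,t}" "E' = {{p,q},{q,r},{s,t}}"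
      "{p,q} \<in> E" "{q,r} \<in> E" "{s,t} \<in> E"
      unfolding CM'_iff by (elim exE conjE) (rule that)
    have EE: "E' \<subseteq> E" using g(3-6) by simp
    have "z \<in> V'" using h(2) by simp
    hence zV: "z \<in> {p,q,r,s,t}" using q(1) g(2) by simp
    obtain f where f: "f \<in> E'" "z \<in> f"
    proof -
      have "z = p \<or> z = q \<or> z = r \<or> z = s \<or> z = t" using zV by simp
      moreover have "{p,q} \<in> E'" "{q,r} \<in> E'" "{s,t} \<in> E'" unfolding g(3) by simp_all
      ultimately show ?thesis using that by blast
    qed
    have "f = {p,q} \<or> f = {q,r} \<or> f = {s,t}" using f(1) g(3) by simp
    hence fV: "f \<subseteq> V''" by (elim disjE) (simp_all add: g(2))
    have "card f = 2" using edges EE f(1) by auto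
    then obtain x where fx: "f = {z,x}" "x \<noteq> z" using f(2) unfolding card_2_iff by auto
    have xin: "x \<in> {a,b,c,d}" using fV fx q(1) h(2) by auto
    have cardE': "card E' = 3"
    proof -
      have "{p,q} \<noteq> {q,r}" "{p,q} \<noteq> {s,t}" "{q,r} \<noteq> {s,t}" using g(1) by (auto simp: doubleton_eq_iff)
      thus ?thesis unfolding g(3) by simp
    qed
    have sub3: "{{a,b},{c,d},f} \<subseteq> E'" using q(2) h(3) f(1) by simp
    have card3: "card {{a,b},{c,d},f} = 3"
    proof -
      have "{a,b} \<noteq> {c,d}" using h(1) by (auto simp: doubleton_eq_iff)
      moreover have "f \<noteq> {a,b}" "f \<noteq> {c,d}" using f(2) h(1) by auto
      ultimately show ?thesis by simp
    qed
    have finE': "finite E'" unfolding g(3) by simp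
    have E'eq: "E' = {{a,b},{c,d},f}" using card_subset_eq[OF finE' sub3] card3 cardE' by simp
    have "{z,x} \<in> E" using fx f(1) EE by blast
    hence "x \<in> X" unfolding X_def using xin by simp
    moreover have "c' = (V', {{a,b},{c,d},{z,x}})" using c'2 q(1) fx E'eq by simp
    ultimately show "c' \<in> (\<lambda>x. (V', {{a,b},{c,d},{z,x}})) ` X" by (rule rev_image_eqI)
  qed
  have "card X \<le> 2"
  proof -
    have "X = (X \<inter> {a,b}) \<union> (X \<inter> {c,d})" unfolding X_def by auto
    hence "card X \<le> card (X \<inter> {a,b}) + card (X \<inter> {c,d})" by (metis card_Un_le)
    moreover have ne: "z \<noteq> a" "z \<noteq> b" "z \<noteq> c" "z \<noteq> d" "a \<noteq> b" "c \<noteq> d" using h(1) by auto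
    moreover have "card (X \<inter> {a,b}) \<le> 1" unfolding X_def by (rule card_le1[OF h(4) ne(1,2,5)])
    moreover have "card (X \<inter> {c,d}) \<le> 1" unfolding X_def by (rule card_le1[OF h(5) ne(3,4,6)])
    ultimately show ?thesis by simp
  qed
  moreover have "finite X" unfolding X_def by simp
  ultimately have "card ((\<lambda>x. (V', {{a,b},{c,d},{z,x}})) ` X) \<le> 2"
    using card_image_le le_trans by blast
  moreover have "finite ((\<lambda>x. (V', {{a,b},{c,d},{z,x}})) ` X)" using \<open>finite X\<close> by simp
  ultimately show ?thesis using card_mono[OF _ sub] by (meson le_trans)
qed

lemma count_M'_le: "card (CM' (V,E)) \<le> card (CM (V,E))"
proof -
  have "(\<Sum>c'\<in>CM' (V,E). card {c\<in>CM (V,E). Qr c' c}) = (\<Sum>c\<in>CM (V,E). card {c'\<in>CM' (V,E). Qr c' c})"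
    by (rule dc[OF fin_CM' fin_CM])
  moreover have "(\<Sum>c'\<in>CM' (V,E). card {c\<in>CM (V,E). Qr c' c}) = 2 * card (CM' (V,E))"
    using fiber_CM' by simp
  moreover have "(\<Sum>c\<in>CM (V,E). card {c'\<in>CM' (V,E). Qr c' c}) \<le> (\<Sum>c\<in>CM (V,E). 2)"
    by (rule sum_mono) (rule fiber_CM_le)
  ultimately show ?thesis by simp
qed

end


lemma CM_T2: "CM (T2 n) = CM ({0..<n}, snd (T2 n))" by (simp add: T2_def)
lemma CM'_T2: "CM' (T2 n) = CM' ({0..<n}, snd (T2 n))" by (simp add: T2_def)

lemma T2_fiber:
  assumes "cp \<in> CM ({0..<n}, snd (T2 n))"
  shows "2 \<le> card {c'\<in>CM' ({0..<n}, snd (T2 n)). Qr c' cp}"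
proof -
  interpret T: tfg "{0..<n}" "snd (T2 n)" by (rule T2_tfg)
  obtain V' E'' where cp: "cp = (V',E'')" by (cases cp)
  from assms[unfolded cp] obtain a b c d z where h: "distinct [a,b,c,d,z]" "V' = {a,b,c,d,z}"
      "E'' = {{a,b},{c,d}}" "{a,b} \<in> snd (T2 n)" "{c,d} \<in> snd (T2 n)" "z \<in> {0..<n}"
    unfolding T.CM_iff by (elim exE conjE) (rule that)
  have "\<exists>x1\<in>{a,b}. {z,x1} \<in> snd (T2 n)" using h(4,6) unfolding T2_edge by auto
  then obtain x1 where x1: "x1 \<in> {a,b}" "{z,x1} \<in> snd (T2 n)" by blast
  have "\<exists>x2\<in>{c,d}. {z,x2} \<in> snd (T2 n)" using h(5,6) unfolding T2_edge by auto
  then obtain x2 where x2: "x2 \<in> {c,d}" "{z,x2} \<in> snd (T2 n)" by blast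
  let ?c1 = "(V', {{a,b},{c,d},{z,x1}})" and ?c2 = "(V', {{a,b},{c,d},{z,x2}})"
  have "x1 \<in> {a,b,c,d}" "x2 \<in> {a,b,c,d}" using x1(1) x2(1) by auto
  hence c1: "?c1 \<in> CM' ({0..<n}, snd (T2 n))" and c2: "?c2 \<in> CM' ({0..<n}, snd (T2 n))"
    using T.mk'[OF h(1) h(4) h(5) x1(2)] T.mk'[OF h(1) h(4) h(5) x2(2)] unfolding h(2) by simp_all
  have q: "Qr ?c1 cp" "Qr ?c2 cp" unfolding Qr_def cp h(3) by simp_all
  have ne: "?c1 \<noteq> ?c2"
  proof
    assume "?c1 = ?c2"
    hence "snd ?c1 = snd ?c2" by (rule arg_cong)
    hence e: "{{a,b},{c,d},{z,x1}} = {{a,b},{c,d},{z,x2}}" by (simp only: snd_conv)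
    have "{z,x1} \<in> {{a,b},{c,d},{z,x1}}" by simp
    hence "{z,x1} \<in> {{a,b},{c,d},{z,x2}}" by (simp only: e)
    moreover have "{z,x1} \<noteq> {a,b}" "{z,x1} \<noteq> {c,d}" using h(1) by auto
    moreover have "x1 \<noteq> x2" "z \<noteq> x2" using h(1) x1(1) x2(1) by auto
    hence "{z,x1} \<noteq> {z,x2}" by (auto simp: doubleton_eq_iff)
    ultimately show False by simp
  qed
  have sub: "{?c1, ?c2} \<subseteq> {c'\<in>CM' ({0..<n}, snd (T2 n)). Qr c' cp}" using c1 c2 q by simp
  have fin: "finite {c'\<in>CM' ({0..<n}, snd (T2 n)). Qr c' cp}" using T.fin_CM' by simp
  have "card {?c1, ?c2} = 2" using ne by simp
  thus ?thesis using card_mono[OF fin sub] by simp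
qed

lemma T2_M'_eq: "card (CM' (T2 n)) = card (CM (T2 n))"
proof -
  interpret T: tfg "{0..<n}" "snd (T2 n)" by (rule T2_tfg)
  let ?G = "({0..<n}, snd (T2 n))"
  have "(\<Sum>c'\<in>CM' ?G. card {c\<in>CM ?G. Qr c' c}) = (\<Sum>c\<in>CM ?G. card {c'\<in>CM' ?G. Qr c' c})"
    by (rule dc[OF T.fin_CM' T.fin_CM])
  moreover have "(\<Sum>c'\<in>CM' ?G. card {c\<in>CM ?G. Qr c' c}) = 2 * card (CM' ?G)"
    using T.fiber_CM' by simp
  moreover have "(\<Sum>c\<in>CM ?G. card {c'\<in>CM' ?G. Qr c' c}) = (\<Sum>c\<in>CM ?G. 2)"
  proof (rule sum.cong)
    fix c assume "c \<in> CM ?G"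
    thus "card {c'\<in>CM' ?G. Qr c' c} = 2" using T.fiber_CM_le T2_fiber by (meson le_antisym)
  qed simp
  ultimately show ?thesis unfolding CM_T2 CM'_T2 by simp
qed

lemma arith_all:
  fixes n :: nat and e S :: int
  assumes "e \<ge> 0" "4*e^2 \<le> int n * S" "S \<le> int n * e" "2*e \<le> S"
    "(2*int (n div 2)+1)*(2*e) - int n*int (n div 2)*(int (n div 2)+1) \<le> S"
  shows "e^2 + e - S \<le> (int (n div 2)*(int n - int (n div 2)))^2 + int (n div 2)*(int n - int (n div 2))
           - int (n div 2)*(int n - int (n div 2))*int n"
proof (cases "even n")
  case True
  then obtain m where m: "n = 2*m" by blast
  show ?thesis
  proof (cases "m = 0")
    case True
    hence "e^2 \<le> 0" using assms(2) m by simp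
    hence "e = 0" by simp
    moreover have "S = 0" using assms(3,4) m True \<open>e = 0\<close> by simp
    ultimately show ?thesis using m True by simp
  next
    case False
    have "int n = 2 * int m" "n div 2 = m" using m by simp_all
    moreover have "e^2 + e - S \<le> (int m * int m)^2 + int m * int m - int m * int m * (2 * int m)"
      using arith_even[of "int m" e S] assms False \<open>int n = 2 * int m\<close> by simp
    ultimately show ?thesis by simp
  qed
next
  case False
  then obtain m where m: "n = 2*m+1" using oddE by blast
  have "int n = 2 * int m + 1" "n div 2 = m" using m by simp_all
  moreover have "e^2 + e - S \<le> (int m * (int m + 1))^2 + int m * (int m + 1) - int m * (int m + 1) * (2 * int m + 1)"
    using arith_odd[of "int m" e S] assms \<open>int n = 2 * int m + 1\<close> \<open>n div 2 = m\<close> by simp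
  ultimately show ?thesis by (simp add: algebra_simps)
qed

lemma G_bounds:
  fixes G :: "nat graph"
  assumes "simple_graph G" "fst G = {0..<n}" "triangle_free G"
  shows "count_copies graph_M G \<le> count_copies graph_M (T2 n)"
    and "count_copies graph_M' G \<le> count_copies graph_M G"
proof -
  define E where "E = snd G"
  have Geq: "G = ({0..<n}, E)" using assms(2) unfolding E_def by (metis prod.collapse)
  interpret tfg "{0..<n}" E using assms unfolding Geq simple_graph_def triangle_free_def tfg_def tfg_axioms_def sg_def
    by auto
  interpret T: tfg "{0..<n}" "snd (T2 n)" by (rule T2_tfg)
  show "count_copies graph_M' G \<le> count_copies graph_M G" unfolding count_CM count_CM' Geq by (rule count_M'_le)
  have m1: "2 * card (CM G) = card D * (n - 4)" using count_M_formula unfolding Geq by simp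
  have m2: "2 * card (CM (T2 n)) = card T.D * (n - 4)" using T.count_M_formula unfolding CM_T2 by simp
  define R where "R = (int (n div 2)*(int n - int (n div 2)))^2 + int (n div 2)*(int n - int (n div 2))
           - int (n div 2)*(int n - int (n div 2))*int n"
  have i1: "int (card D) \<le> R"
    unfolding cardD R_def using arith_all[where n=n and e="int (card E)" and S="int (\<Sum>v\<in>{0..<n}. deg E v * deg E v)"]
      main_ineqs(1-3) main_ineqs(4)[of "int (n div 2)"] by simp
  have hn: "n div 2 \<le> n" by simp
  have "int (card T.D) = int (card (snd (T2 n)))^2 + int (card (snd (T2 n))) - int (\<Sum>v\<in>{0..<n}. deg (snd (T2 n)) v * deg (snd (T2 n)) v)"
    by (rule T.cardD)
  also have "\<dots> = R" unfolding T2_counts R_def using hn by (simp add: of_nat_diff)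
  finally have i2: "int (card T.D) = R" .
  have "card D \<le> card T.D" using i1 i2 by simp
  hence mm: "card D * (n - 4) \<le> card T.D * (n - 4)" by (rule mult_right_mono) simp
  have "card (CM G) \<le> card (CM (T2 n))" using m1 m2 mm by linarith
  thus "count_copies graph_M G \<le> count_copies graph_M (T2 n)" unfolding count_CM .
qed


theorem mainTheorem11:
  fixes n :: nat
  shows "ex_tf n graph_M = count_copies graph_M (T2 n)
       \<and> ex_tf n graph_M' = count_copies graph_M' (T2 n)"
proof -
  let ?A = "{count_copies graph_M G | G :: nat graph. simple_graph G \<and> fst G = {0..<n} \<and> triangle_free G}"
  let ?B = "{count_copies graph_M' G | G :: nat graph. simple_graph G \<and> fst G = {0..<n} \<and> triangle_free G}"
  let ?x = "count_copies graph_M (T2 n)"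
  have T: "simple_graph (T2 n)" "fst (T2 n) = {0..<n}" "triangle_free (T2 n)"
    by (rule T2_simple, rule T2_fst, rule T2_tf)
  have eqT: "count_copies graph_M' (T2 n) = ?x" unfolding count_CM count_CM' by (rule T2_M'_eq)
  have bA: "\<And>y. y \<in> ?A \<Longrightarrow> y \<le> ?x" using G_bounds(1) by blast
  have bB: "\<And>y. y \<in> ?B \<Longrightarrow> y \<le> ?x" using G_bounds by (blast intro: le_trans)
  have iA: "?x \<in> ?A" using T by blast
  have iB: "count_copies graph_M' (T2 n) \<in> ?B" using T by blast
  have fA: "finite ?A" by (rule finite_subset[of _ "{..?x}"]) (use bA in auto)
  have fB: "finite ?B" by (rule finite_subset[of _ "{..?x}"]) (use bB in auto)
  have "ex_tf n graph_M = ?x" unfolding ex_tf_def by (rule Max_eqI[OF fA bA iA])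
  moreover have "ex_tf n graph_M' = count_copies graph_M' (T2 n)" unfolding ex_tf_def
    by (rule Max_eqI[OF fB _ iB]) (use bB eqT in simp)
  ultimately show ?thesis by simp
qed


end
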